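(* Fix $x>0$. There exists a constant $C(x)$, depending only on $x$, such that for all nonnegative integers $n,s$ with $s^{16}\le n$, $$ \left|\omega_n^{(s)}(x)\right|\le \frac{C(x)}{(n+1)^{1/4}}. $$
   Context: For integers $n\ge 0$, $s\ge 0$, the generalized Laguerre polynomial is $L_n^{(s)}(x)=\frac{(n+s)!}{n!}\sum_{i=0}^{n}\binom{n}{i}(-1)^i\frac{x^i}{(i+s)!}$, and the normalized Laguerre function is $$ \omega_n^{(s)}(x)=\sqrt{\frac{n!}{(n+s)!}}\,e^{-x/2}\,x^{s/2}\,L_n^{(s)}(x), $$ which satisfies $\int_0^{\infty}\omega_m^{(s)}(x)\,\omega_n^{(s)}(x)\,dx=\delta_{n,m}$. *)

theory Defs
  imports "HOL-Analysis.Analysis"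
begin

definition laguerre :: "nat \<Rightarrow> nat \<Rightarrow> real \<Rightarrow> real" where
  "laguerre n s x = fact (n + s) / fact n *
     (\<Sum>i=0..n. real (n choose i) * (-1) ^ i * x ^ i / fact (i + s))"

definition laguerre_fun :: "nat \<Rightarrow> nat \<Rightarrow> real \<Rightarrow> real" where
  "laguerre_fun n s x = sqrt (fact n / fact (n + s)) * exp (- x / 2) *
     x powr (real s / 2) * laguerre n s x"

end

theory Submission
  imports Defs
begin

definition T :: "real \<Rightarrow> nat \<Rightarrow> nat \<Rightarrow> nat \<Rightarrow> real" where
 "T a m k j = (if j \<le> m \<and> j \<le> k then (-1)^(k-j) * a^(m+k-2*j) / (fact j * fact (m-j) * fact (k-j)) else 0)"

definition D :: "real \<Rightarrow> nat \<Rightarrow> nat \<Rightarrow> real" where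
 "D a m k = (\<Sum>j\<le>m. T a m k j)"

lemma aux1: "(c::real) \<noteq> 0 \<Longrightarrow> c * (s * (a*p) / (f * (c * g) * h)) = a * (s*p/(f*g*h))"
  by (simp add: field_simps)
lemma aux2: "(c::real) \<noteq> 0 \<Longrightarrow> c * (s * p / ((c*f) * g * h)) = (s*p/(f*g*h))"
  by (simp add: field_simps)
lemma aux3: "(c::real) \<noteq> 0 \<Longrightarrow> c * (-s * (a*p) / (f * g * (c*h))) = -a * (s*p/(f*g*h))"
  by (simp add: field_simps)

lemma split_n: "real n * t = real j * t + real (n-j) * t" if "j \<le> n"
proof -
  have "real n = real j + real (n - j)" using that by simp
  then show ?thesis by (simp only: distrib_right)
qed

lemma T_a: "j \<le> Suc m \<Longrightarrow> real (Suc m - j) * T a (Suc m) k j = a * T a m k j"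
proof (cases "j = Suc m")
  case True then show ?thesis by (simp add: T_def)
next
  case False
  assume "j \<le> Suc m"
  with False have jm: "j \<le> m" by simp
  show ?thesis
  proof (cases "j \<le> k")
    case True
    have e1: "Suc m - j = Suc (m - j)" using jm by simp
    have e2: "Suc m + k - 2*j = Suc (m + k - 2*j)" using jm True by simp
    have "real (Suc m - j) * T a (Suc m) k j = real (Suc (m-j)) * ((-1)^(k-j) * (a * a^(m+k-2*j)) / (fact j * (real (Suc (m-j)) * fact (m-j)) * fact (k-j)))"
      using jm True unfolding T_def e1 e2 by (simp only: fact_Suc power_Suc) simp
    also have "\<dots> = a * T a m k j" using jm True unfolding T_def by (subst aux1) auto
    finally show ?thesis .
  qed (simp add: T_def)
qed

lemma T_b: "real (Suc j) * T a (Suc m) (Suc k) (Suc j) = T a m k j"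
proof (cases "j \<le> m \<and> j \<le> k")
  case True
  have e2: "Suc m + Suc k - 2*Suc j = m + k - 2*j" using True by simp
  have "real (Suc j) * T a (Suc m) (Suc k) (Suc j) = real (Suc j) * ((-1)^(k-j) * a^(m+k-2*j) / ((real (Suc j) * fact j) * fact (m-j) * fact (k-j)))"
    using True unfolding T_def e2 by (simp only: fact_Suc) simp
  also have "\<dots> = T a m k j" using True unfolding T_def by (subst aux2) auto
  finally show ?thesis .
qed (auto simp: T_def)

lemma T_c: "T a m k j = 0" if "j > m" using that by (simp add: T_def)

lemma R2: "real (Suc m) * D a (Suc m) k = (if k = 0 then 0 else D a m (k-1)) + a * D a m k"
proof -
  have "real (Suc m) * D a (Suc m) k = (\<Sum>j\<le>Suc m. real j * T a (Suc m) k j + real (Suc m - j) * T a (Suc m) k j)"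
    unfolding D_def sum_distrib_left by (intro sum.cong refl split_n) simp
  also have "\<dots> = (\<Sum>j\<le>Suc m. real j * T a (Suc m) k j) + (\<Sum>j\<le>Suc m. a * T a m k j)"
    by (simp only: sum.distrib, rule arg_cong[where f="\<lambda>t. _ + t"], rule sum.cong, simp, rule T_a, simp)
  also have "(\<Sum>j\<le>Suc m. a * T a m k j) = a * D a m k"
    by (simp add: D_def sum_distrib_left T_c)
  also have "(\<Sum>j\<le>Suc m. real j * T a (Suc m) k j) = (\<Sum>j\<le>m. real (Suc j) * T a (Suc m) k (Suc j))"
    by (subst sum.atMost_Suc_shift) simp
  also have "\<dots> = (if k = 0 then 0 else D a m (k-1))"
  proof (cases k)
    case 0 then show ?thesis by (simp add: T_def)
  next
    case (Suc k') then show ?thesis by (simp only: Suc T_b D_def) simp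
  qed
  finally show ?thesis by simp
qed

lemma T_d: "j \<le> Suc k \<Longrightarrow> real (Suc k - j) * T a m (Suc k) j = - a * T a m k j"
proof (cases "j = Suc k")
  case True then show ?thesis by (simp add: T_def)
next
  case False
  assume "j \<le> Suc k"
  with False have jk: "j \<le> k" by simp
  show ?thesis
  proof (cases "j \<le> m")
    case True
    have e1: "Suc k - j = Suc (k - j)" using jk by simp
    have e2: "m + Suc k - 2*j = Suc (m + k - 2*j)" using jk True by simp
    have "real (Suc k - j) * T a m (Suc k) j = real (Suc (k-j)) * (-((-1)^(k-j)) * (a * a^(m+k-2*j)) / (fact j * fact (m-j) * (real (Suc (k-j)) * fact (k-j))))"
      using jk True unfolding T_def e1 e2 by (simp only: fact_Suc power_Suc) simp
    also have "\<dots> = - a * T a m k j" using jk True unfolding T_def by (subst aux3) auto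
    finally show ?thesis .
  qed (simp add: T_def)
qed

lemma T_e: "real (Suc j) * T a (Suc m) (Suc k) (Suc j) = T a m k j"
  by (rule T_b)

lemma R3: "real (Suc k) * D a m (Suc k) = (if m = 0 then 0 else D a (m-1) k) - a * D a m k"
proof -
  have "real (Suc k) * D a m (Suc k) = (\<Sum>j\<le>m. real j * T a m (Suc k) j + real (Suc k - j) * T a m (Suc k) j)"
    unfolding D_def sum_distrib_left
  proof (intro sum.cong refl)
    fix j assume "j \<in> {..m}"
    show "real (Suc k) * T a m (Suc k) j = real j * T a m (Suc k) j + real (Suc k - j) * T a m (Suc k) j"
    proof (cases "j \<le> Suc k")
      case True then show ?thesis by (rule split_n)
    qed (simp add: T_def)
  qed
  also have "\<dots> = (\<Sum>j\<le>m. real j * T a m (Suc k) j) + (\<Sum>j\<le>m. - a * T a m k j)"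
  proof -
    have "(\<Sum>j\<le>m. real (Suc k - j) * T a m (Suc k) j) = (\<Sum>j\<le>m. - a * T a m k j)"
    proof (rule sum.cong)
      fix j assume "j \<in> {..m}"
      show "real (Suc k - j) * T a m (Suc k) j = - a * T a m k j"
      proof (cases "j \<le> Suc k")
        case True then show ?thesis by (rule T_d)
      qed (simp add: T_def)
    qed simp
    then show ?thesis by (simp only: sum.distrib)
  qed
  also have "(\<Sum>j\<le>m. - a * T a m k j) = - a * D a m k"
    by (simp add: D_def sum_distrib_left)
  also have "(\<Sum>j\<le>m. real j * T a m (Suc k) j) = (if m = 0 then 0 else D a (m-1) k)"
  proof (cases m)
    case 0 then show ?thesis by simp
  next
    case (Suc m')
    then have "(\<Sum>j\<le>m. real j * T a m (Suc k) j) = (\<Sum>j\<le>m'. real (Suc j) * T a (Suc m') (Suc k) (Suc j))"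
      unfolding Suc by (subst sum.atMost_Suc_shift) simp
    then show ?thesis using Suc by (simp only: T_b D_def) simp
  qed
  finally show ?thesis by simp
qed

lemma lc1: "(M::real)*P = Q + a*R \<Longrightarrow> K*P = Q - a*S \<Longrightarrow> (M - K - a^2)*P = a*(S + (R - a*P))"
  by (simp add: algebra_simps power2_eq_square)

lemma R1: "(real m - real k - a^2) * D a m k = a * ((if k=0 then 0 else D a m (k-1)) + real (Suc k) * D a m (Suc k))"
proof (cases m)
  case 0
  have e3: "real (Suc k) * D a 0 (Suc k) = - a * D a 0 k" using R3[of k a 0] by simp
  show ?thesis
  proof (cases k)
    case 0 then show ?thesis using e3 0 \<open>m=0\<close> by (simp add: power2_eq_square)
  next
    case (Suc k')
    have e2: "real k * D a 0 k = - a * D a 0 k'" using R3[of k' a 0] Suc by simp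
    have e2': "a * D a 0 k' = - real k * D a 0 k" using e2 by simp
    have e3': "a * (real (Suc k) * D a 0 (Suc k)) = -(a^2) * D a 0 k" using e3 by (simp add: power2_eq_square)
    have "(real m - real k - a^2) * D a 0 k = - real k * D a 0 k + (-(a^2) * D a 0 k)" using \<open>m=0\<close> by (simp add: algebra_simps)
    also have "\<dots> = a * D a 0 k' + a*(real (Suc k) * D a 0 (Suc k))" by (simp only: e2' e3')
    also have "\<dots> = a * ((if k=0 then 0 else D a 0 (k-1)) + real (Suc k) * D a 0 (Suc k))" using Suc by (simp only: distrib_left) simp
    finally show ?thesis using \<open>m=0\<close> by simp
  qed
next
  case (Suc m')
  show ?thesis
  proof (cases k)
    case 0
    have e1: "real m * D a m 0 = a * D a m' 0" using R2[of m' a 0] Suc by simp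
    have e3: "D a m 1 = D a m' 0 - a * D a m 0" using R3[of 0 a m] Suc by simp
    show ?thesis using e1 e3 0 by (simp add: left_diff_distrib right_diff_distrib power2_eq_square)
  next
    case (Suc k')
    have e1: "real m * D a m k = D a m' k' + a * D a m' k" using R2[of m' a k] Suc \<open>m = Suc m'\<close> by simp
    have e2: "real k * D a m k = D a m' k' - a * D a m k'" using R3[of k' a m] Suc \<open>m = Suc m'\<close> by simp
    have e3: "real (Suc k) * D a m (Suc k) = D a m' k - a * D a m k" using R3[of k a m] \<open>m = Suc m'\<close> by simp
    have "(real m - real k - a^2) * D a m k = a * (D a m k' + (D a m' k - a * D a m k))"
      by (rule lc1[OF e1 e2])
    then show ?thesis using e3 Suc by simp
  qed
qed

definition M :: "real \<Rightarrow> nat \<Rightarrow> nat \<Rightarrow> real" where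
  "M a n K = fact n * (\<Sum>k\<le>K. fact k * (D a n k)^2)"

lemma gen_base: "N > 0 \<Longrightarrow> (F::real) > 0 \<Longrightarrow> N * Z = a * P \<Longrightarrow> (N - 1 - a^2) * P = a * Q \<Longrightarrow>
   (N * F) * Z^2 = F * P^2 - F * 1 * P * (P + a * Q) / N"
proof -
  assume h: "N > 0" "F > 0" "N * Z = a * P" "(N - 1 - a^2) * P = a * Q"
  have "(N * F) * Z^2 = F * (N*Z)^2 / N" using h(1) by (simp add: field_simps power2_eq_square)
  also have "\<dots> = F * (a*P)^2 / N" using h(3) by simp
  also have "\<dots> = F * (N * P^2 - P^2 - P * ((N - 1 - a^2) * P)) / N" by (simp add: algebra_simps power2_eq_square)
  also have "\<dots> = F * (N * P^2 - P^2 - P * (a * Q)) / N" using h(4) by simp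
  also have "\<dots> = F * P^2 - F * 1 * P * (P + a * Q) / N" using h(1) by (simp add: field_simps power2_eq_square)
  finally show ?thesis .
qed

lemma gen_step: "(N::real) > 0 \<Longrightarrow> N * Z = p + a * q \<Longrightarrow> (N - L - a^2) * q = a * (p + L * r) \<Longrightarrow>
   A1 = A0 - F*G*p*(p + a*q)/N \<Longrightarrow>
   A1 + (N*F)*G*Z^2 = (A0 + F*G*q^2) - F*(L*G)*q*(q + a*r)/N"
proof -
  assume h: "N > 0" "N * Z = p + a * q" "(N - L - a^2) * q = a * (p + L * r)" "A1 = A0 - F*G*p*(p + a*q)/N"
  have "N \<noteq> 0" using h(1) by simp
  then have Zeq: "Z = (p + a*q) / N" using h(2)[symmetric] by simp
  have r: "a * L * r = (N - L - a^2) * q - a * p" using h(3) by (simp add: algebra_simps)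
  have "A1 + (N*F)*G*Z^2 - ((A0 + F*G*q^2) - F*(L*G)*q*(q + a*r)/N)
      = F*G/N * (- p*(p + a*q) + (p+a*q)^2 - N * q^2 + L*q^2 + q * (a*L*r))"
    unfolding Zeq h(4) using h(1) by (simp add: field_simps power2_eq_square)
  also have "\<dots> = 0" unfolding r by (simp add: algebra_simps power2_eq_square)
  finally show ?thesis by simp
qed

lemma mass_step: "M a (Suc n) K = M a n K - fact n * fact (Suc K) * D a n K * (D a n K + a * D a n (Suc K)) / real (Suc n)"
proof (induction K)
  case 0
  have e1: "real (Suc n) * D a (Suc n) 0 = a * D a n 0" using R2[of n a 0] by simp
  have e2: "(real (Suc n) - 1 - a^2) * D a n 0 = a * D a n 1" using R1[of n 0 a] by simp
  show ?case using gen_base[OF _ _ e1 e2, of "fact n"] by (simp add: M_def fact_Suc del: of_nat_Suc)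
next
  case (Suc K)
  have e1: "real (Suc n) * D a (Suc n) (Suc K) = D a n K + a * D a n (Suc K)" using R2[of n a "Suc K"] by simp
  have e2: "(real (Suc n) - real (Suc (Suc K)) - a^2) * D a n (Suc K) = a * (D a n K + real (Suc (Suc K)) * D a n (Suc (Suc K)))"
    using R1[of n "Suc K" a] by (simp add: algebra_simps)
  have "M a (Suc n) (Suc K) = M a (Suc n) K + (real (Suc n) * fact n) * fact (Suc K) * (D a (Suc n) (Suc K))^2"
    by (simp add: M_def algebra_simps del: of_nat_Suc)
  also have "\<dots> = (M a n K + fact n * fact (Suc K) * (D a n (Suc K))^2) - fact n * (real (Suc (Suc K)) * fact (Suc K)) * D a n (Suc K) * (D a n (Suc K) + a * D a n (Suc (Suc K))) / real (Suc n)"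
    by (rule gen_step[OF _ e1 e2 Suc.IH]) simp
  also have "M a n K + fact n * fact (Suc K) * (D a n (Suc K))^2 = M a n (Suc K)"
    by (simp add: M_def algebra_simps)
  finally show ?case by (simp only: fact_Suc[of "Suc K"])
qed

lemma T_bound: "i \<le> j \<Longrightarrow> j \<le> K \<Longrightarrow> \<bar>T a j K i\<bar> \<le> (1+\<bar>a\<bar>)^(j+K) / fact (K-j)"
proof -
  assume h: "i \<le> j" "j \<le> K"
  have "\<bar>T a j K i\<bar> = \<bar>a\<bar>^(j+K-2*i) / (fact i * fact (j-i) * fact (K-i))"
    using h by (simp add: T_def abs_mult power_abs)
  also have "\<dots> \<le> (1+\<bar>a\<bar>)^(j+K) / fact (K-j)"
  proof (rule frac_le)
    show "\<bar>a\<bar>^(j+K-2*i) \<le> (1+\<bar>a\<bar>)^(j+K)"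
    proof -
      have "\<bar>a\<bar>^(j+K-2*i) \<le> (1+\<bar>a\<bar>)^(j+K-2*i)" by (rule power_mono) auto
      also have "\<dots> \<le> (1+\<bar>a\<bar>)^(j+K)" by (rule power_increasing) auto
      finally show ?thesis .
    qed
    show "(0::real) < fact (K-j)" by simp
    have "fact (K-j) \<le> (fact (K-i) :: real)" using h by (intro fact_mono) simp
    also have "\<dots> \<le> fact i * fact (j-i) * fact (K-i)"
    proof -
      have f1: "1 \<le> (fact i :: real)" "1 \<le> (fact (j-i) :: real)" by simp_all
      have "1 * 1 \<le> (fact i * fact (j-i) :: real)" by (rule mult_mono[OF f1]) auto
      then have "1 * fact (K-i) \<le> (fact i * fact (j-i)) * (fact (K-i) :: real)"
        by (intro mult_right_mono) auto
      then show ?thesis by simp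
    qed
    finally show "fact (K-j) \<le> (fact i * fact (j-i) * fact (K-i) :: real)" .
  qed simp
  finally show ?thesis .
qed

lemma D_bound: "j \<le> K \<Longrightarrow> \<bar>D a j K\<bar> \<le> real (Suc j) * ((1+\<bar>a\<bar>)^(j+K) / fact (K-j))"
proof -
  assume h: "j \<le> K"
  have "\<bar>D a j K\<bar> \<le> (\<Sum>i\<le>j. \<bar>T a j K i\<bar>)" unfolding D_def by (rule sum_abs)
  also have "\<dots> \<le> (\<Sum>i\<le>j. (1+\<bar>a\<bar>)^(j+K) / fact (K-j))"
    by (rule sum_mono) (use h T_bound in auto)
  finally show ?thesis by simp
qed

lemma fact_shift: "fact (m + r) \<le> (fact m :: real) * real (m+r)^r"
proof (induction r)
  case 0 then show ?case by simp
next
  case (Suc r)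
  have "fact (m + Suc r) = real (m + Suc r) * (fact (m + r) :: real)" by (simp add: fact_Suc)
  also have "\<dots> \<le> real (m + Suc r) * (fact m * real (m+r)^r)"
    by (rule mult_left_mono[OF Suc.IH]) simp
  also have "\<dots> \<le> real (m + Suc r) * (fact m * real (m+Suc r)^r)"
    by (intro mult_left_mono power_mono) auto
  also have "\<dots> = fact m * real (m + Suc r)^(Suc r)" by simp
  finally show ?case .
qed

lemma lin_exp: "real t + c \<le> c * 2^t" if "c \<ge> 1"
proof (induction t)
  case 0 then show ?case by simp
next
  case (Suc t)
  have "real (Suc t) + c \<le> 2 * (real t + c)" using that by simp
  also have "\<dots> \<le> 2 * (c * 2^t)" using Suc.IH by simp
  finally show ?case by simp
qed

definition eps :: "real \<Rightarrow> nat \<Rightarrow> nat \<Rightarrow> real" where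
  "eps a j K = fact j * fact (Suc K) * D a j K * (D a j K + a * D a j (Suc K)) / real (Suc j)"

lemma eps_bound: "\<bar>eps a j (t + j)\<bar> \<le> (2 * fact j * real (Suc j)^(j+2) * (1+\<bar>a\<bar>)^(4*j+4)) * ((2^(j+1) * (1+\<bar>a\<bar>)^2)^t / fact t)"
proof -
  define A where "A = 1 + \<bar>a\<bar>"
  define c where "c = real (Suc j)"
  define U where "U = c * A^(2*j+t+2) / fact t"
  have A1: "A \<ge> 1" unfolding A_def by simp
  have c1: "c \<ge> 1" unfolding c_def by simp
  have U0: "U \<ge> 0" unfolding U_def using A1 c1 by simp
  have d1: "\<bar>D a j (t+j)\<bar> \<le> U"
  proof -
    have e: "j + (t + j) = 2*j + t" "t + j - j = t" by simp_all
    have "\<bar>D a j (t+j)\<bar> \<le> c * (A^(2*j+t) / fact t)" using D_bound[of j "t+j" a, unfolded e] unfolding A_def c_def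
      by simp
    also have "\<dots> \<le> U" unfolding U_def using A1 c1
      by (simp only: times_divide_eq_right[symmetric]) (intro mult_left_mono divide_right_mono power_increasing, auto)
    finally show ?thesis .
  qed
  have d2: "\<bar>a\<bar> * \<bar>D a j (Suc (t+j))\<bar> \<le> U"
  proof -
    have e: "j + Suc (t + j) = 2*j + t + 1" "Suc (t + j) - j = Suc t" by simp_all
    have "\<bar>D a j (Suc (t+j))\<bar> \<le> c * (A^(2*j+t+1) / fact (Suc t))" using D_bound[of j "Suc (t+j)" a, unfolded e] unfolding A_def c_def
      by simp
    also have "\<dots> \<le> c * (A^(2*j+t+1) / fact t)" using c1 A1
      by (intro mult_left_mono divide_left_mono fact_mono) auto
    finally have "\<bar>a\<bar> * \<bar>D a j (Suc (t+j))\<bar> \<le> A * (c * (A^(2*j+t+1) / fact t))"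
      using A1 unfolding A_def by (intro mult_mono) auto
    also have "\<dots> = U" unfolding U_def by (simp add: field_simps)
    finally show ?thesis .
  qed
  have d3: "\<bar>D a j (t+j) + a * D a j (Suc (t+j))\<bar> \<le> 2 * U"
    using d1 d2 abs_triangle_ineq[of "D a j (t+j)" "a * D a j (Suc (t+j))"] by (simp add: abs_mult)
  have f1: "fact (Suc (t+j)) \<le> fact t * (c * 2^t)^(j+1)"
  proof -
    have "fact (Suc (t+j)) = (fact (t + (j+1)) :: real)" by simp
    also have "\<dots> \<le> fact t * real (t + (j+1))^(j+1)" by (rule fact_shift)
    also have "\<dots> \<le> fact t * (c * 2^t)^(j+1)"
      using lin_exp[of c t] c1 unfolding c_def by (intro mult_left_mono power_mono) auto
    finally show ?thesis .
  qed
  have "\<bar>eps a j (t + j)\<bar> = fact j * fact (Suc (t+j)) * \<bar>D a j (t+j)\<bar> * \<bar>D a j (t+j) + a * D a j (Suc (t+j))\<bar> / c"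
    unfolding eps_def c_def by (simp add: abs_mult)
  also have "\<dots> \<le> fact j * (fact t * (c * 2^t)^(j+1)) * U * (2 * U) / c"
  proof -
    have "fact j * fact (Suc (t+j)) \<le> fact j * (fact t * (c * 2^t)^(j+1))"
      using f1 by (rule mult_left_mono) simp
    then have "fact j * fact (Suc (t+j)) * \<bar>D a j (t+j)\<bar> \<le> fact j * (fact t * (c * 2^t)^(j+1)) * U"
      by (rule mult_mono[OF _ d1]) (use U0 c1 in auto)
    then have "fact j * fact (Suc (t+j)) * \<bar>D a j (t+j)\<bar> * \<bar>D a j (t+j) + a * D a j (Suc (t+j))\<bar> \<le> fact j * (fact t * (c * 2^t)^(j+1)) * U * (2 * U)"
      by (rule mult_mono[OF _ d3]) (use U0 c1 in auto)
    then show ?thesis using c1 by (intro divide_right_mono) auto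
  qed
  also have "\<dots> = (2 * fact j * c^(j+2) * A^(4*j+4)) * ((2^(j+1) * A^2)^t / fact t)"
  proof -
    have p1: "(c * 2^t)^(j+1) = c^(j+1) * (2^(j+1))^t"
      by (simp only: power_mult_distrib power_mult[symmetric] mult.commute)
    have p2: "A^(2*j+t+2) * A^(2*j+t+2) = A^(4*j+4) * (A^2)^t"
      by (simp only: power_add[symmetric] power_mult[symmetric]) (rule arg_cong[where f="\<lambda>n. A^n"], simp)
    have p3: "c^(j+2) = c^(j+1) * c" by simp
    have ft: "fact t \<noteq> (0::real)" by simp
    have "fact j * (fact t * (c * 2^t)^(j+1)) * U * (2 * U) / c
        = 2 * fact j * c^(j+1) * (2^(j+1))^t * (A^(2*j+t+2) * A^(2*j+t+2)) * c / fact t"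
      unfolding U_def p1 using c1 ft by (simp add: field_simps)
    also have "\<dots> = (2 * fact j * c^(j+2) * A^(4*j+4)) * ((2^(j+1) * A^2)^t / fact t)"
      unfolding p2 p3 power_mult_distrib by (simp add: field_simps)
    finally show ?thesis .
  qed
  finally show ?thesis unfolding A_def c_def .
qed

lemma eps_lim: "(\<lambda>K. eps a j K) \<longlonglongrightarrow> 0"
proof (rule LIMSEQ_offset[where k=j])
  define B where "B = (2::real)^(j+1) * (1+\<bar>a\<bar>)^2"
  define Cst where "Cst = 2 * fact j * real (Suc j)^(j+2) * (1+\<bar>a\<bar>)^(4*j+4)"
  have h: "(\<lambda>t. inverse (fact t) * B^t) \<longlonglongrightarrow> 0" by (rule summable_LIMSEQ_zero[OF summable_exp])
  have e: "(\<lambda>t. B^t / fact t) = (\<lambda>t. inverse (fact t) * B^t)" by (rule ext) (simp add: field_simps)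
  have lim: "(\<lambda>t. Cst * (B^t / fact t)) \<longlonglongrightarrow> 0"
    by (rule tendsto_mult_right_zero) (unfold e, rule h)
  have ev: "\<forall>\<^sub>F t in sequentially. norm (eps a j (t + j)) \<le> Cst * (B^t / fact t)"
    unfolding B_def Cst_def real_norm_def by (intro always_eventually allI eps_bound)
  show "(\<lambda>t. eps a j (t + j)) \<longlonglongrightarrow> 0" by (rule Lim_null_comparison[OF ev lim])
qed
lemma M_formula: "M a n K = M a 0 K - (\<Sum>j<n. eps a j K)"
  by (induction n) (simp_all add: mass_step eps_def)

lemma M0_bound: "M a 0 K \<le> exp (a^2)"
proof -
  have "M a 0 K = (\<Sum>k<Suc K. (a^2)^k /\<^sub>R fact k)"
  proof -
    have D0: "D a 0 k = (-1)^k * a^k / fact k" for k by (simp add: D_def T_def)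
    show ?thesis unfolding M_def D0 lessThan_Suc_atMost
    proof (simp only: fact_0 mult_1, intro sum.cong refl)
    fix k
    have sq: "((-1)^k * a^k)^2 = ((a::real)^2)^k"
    proof -
      have "((-1)^k * a^k)^2 = ((-1)^k)^2 * (a^k)^2" by (rule power_mult_distrib)
      also have "((-1::real)^k)^2 = 1" by (simp add: power_even_eq power_mult_distrib flip: power_mult)
      also have "(a^k)^2 = (a^2)^k" by (simp only: power_mult[symmetric] mult.commute)
      finally show ?thesis by simp
    qed
    have "fact k * ((-1)^k * a^k / fact k)^2 = ((a^2)^k / fact k :: real)"
      by (simp only: power_divide sq) (simp add: power2_eq_square)
    then show "fact k * ((-1)^k * a^k / fact k)^2 = (a^2)^k /\<^sub>R fact k" by (simp add: divide_inverse)
    qed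
  qed
  also have "\<dots> \<le> (\<Sum>k. (a^2)^k /\<^sub>R fact k)"
    by (rule sum_le_suminf) (use exp_converges[of "a^2"] in \<open>auto simp: sums_iff\<close>)
  also have "\<dots> = exp (a^2)" using exp_converges sums_unique by metis
  finally show ?thesis .
qed

lemma M_mono: "K \<le> K' \<Longrightarrow> M a n K \<le> M a n K'"
  unfolding M_def by (intro mult_left_mono sum_mono2) auto

lemma M_bound: "M a n K \<le> exp (a^2)"
proof (rule LIMSEQ_le_const)
  show "(\<lambda>K'. exp (a^2) - (\<Sum>j<n. eps a j K')) \<longlonglongrightarrow> exp (a^2)"
    using tendsto_diff[OF tendsto_const tendsto_sum[OF eps_lim]] by simp
  show "\<exists>N. \<forall>K'\<ge>N. M a n K \<le> exp (a^2) - (\<Sum>j<n. eps a j K')"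
  proof (intro exI allI impI)
    fix K' assume "K' \<ge> K"
    then have "M a n K \<le> M a n K'" by (rule M_mono)
    also have "\<dots> \<le> exp (a^2) - (\<Sum>j<n. eps a j K')" using M_formula[of a n K'] M0_bound[of a K'] by simp
    finally show "M a n K \<le> exp (a^2) - (\<Sum>j<n. eps a j K')" .
  qed
qed

lemma sonin_step:
  fixes B b c u q w l0 l1 d x :: real
  assumes rec: "B*w + b*u = c*q" and d0: "0 \<le> d" and l1: "l1 = l0 + d"
    and BB: "B^2 = b^2 + x" and x0: "x \<ge> 0" and l0: "l0 \<ge> 0"
    and B0: "B \<ge> 0" and b0: "b \<ge> 0"
    and cond: "\<bar>l0 - d*c\<bar> \<le> 2*d*B"
  shows "l0*(b^2*(u^2+q^2) - b*(c+1)*u*q) \<le> l1*(B^2*(q^2+w^2) - B*c*q*w)"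
proof -
  have id: "B^2*w^2 - B*c*q*w = b^2*u^2 - b*c*u*q"
  proof -
    have Bw: "B*w = c*q - b*u" using rec by simp
    have "B^2*w^2 - B*c*q*w = (B*w)^2 - c*q*(B*w)" by (simp add: algebra_simps power2_eq_square)
    also have "\<dots> = (c*q - b*u)^2 - c*q*(c*q - b*u)" by (simp only: Bw)
    also have "\<dots> = b^2*u^2 - b*c*u*q" by (simp add: algebra_simps power2_eq_square)
    finally show ?thesis .
  qed
  have "l1*(B^2*(q^2+w^2) - B*c*q*w) - l0*(b^2*(u^2+q^2) - b*(c+1)*u*q)
      = (l0*x + d*B^2)*q^2 + d*b^2*u^2 + b*(l0 - d*c)*(u*q)"
  proof -
    have "l1*(B^2*(q^2+w^2) - B*c*q*w) = l1*(B^2*q^2 + (B^2*w^2 - B*c*q*w))" by (simp add: algebra_simps)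
    also have "\<dots> = l1*(B^2*q^2 + (b^2*u^2 - b*c*u*q))" by (simp only: id)
    also have "\<dots> = l1*(B^2*q^2 + b^2*u^2 - b*c*u*q)" by (simp add: algebra_simps)
    finally show ?thesis unfolding l1 BB by (simp add: algebra_simps power2_eq_square)
  qed
  moreover have "(l0*x + d*B^2)*q^2 + d*b^2*u^2 + b*(l0 - d*c)*(u*q) \<ge> 0"
  proof -
    have "\<bar>b*(l0 - d*c)*(u*q)\<bar> \<le> b*(2*d*B)*\<bar>u*q\<bar>"
      using cond b0 by (simp add: abs_mult mult_right_mono mult_left_mono)
    also have "\<dots> = d * (2*(B*\<bar>q\<bar>)*(b*\<bar>u\<bar>))" by (simp add: abs_mult algebra_simps)
    also have "\<dots> \<le> d * ((B*\<bar>q\<bar>)^2 + (b*\<bar>u\<bar>)^2)"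
      using d0 by (intro mult_left_mono) (auto simp: sum_squares_bound)
    also have "\<dots> = d*B^2*q^2 + d*b^2*u^2" by (simp add: power_mult_distrib algebra_simps)
    finally have "b*(l0 - d*c)*(u*q) \<ge> - (d*B^2*q^2 + d*b^2*u^2)" by linarith
    moreover have "l0*x*q^2 \<ge> 0" using l0 x0 by simp
    ultimately show ?thesis by (simp add: algebra_simps)
  qed
  ultimately show ?thesis by linarith
qed

lemma F_lower:
  fixes B c q w l :: real
  assumes "\<bar>c\<bar> \<le> B" "l \<ge> 0"
  shows "l*(B^2*(q^2+w^2))/2 \<le> l*(B^2*(q^2+w^2) - B*c*q*w)"
proof -
  have B0: "B \<ge> 0" using assms(1) by linarith
  have "\<bar>B*c*q*w\<bar> = B*(\<bar>c\<bar>*\<bar>q*w\<bar>)" using B0 by (simp add: abs_mult)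
  also have "\<dots> \<le> B*(B*\<bar>q*w\<bar>)" using B0 assms(1) by (intro mult_left_mono mult_right_mono) auto
  also have "\<dots> = B*B*\<bar>q*w\<bar>" by simp
  also have "\<dots> \<le> B^2*(q^2+w^2)/2"
  proof -
    have h2: "2*\<bar>q*w\<bar> \<le> q^2+w^2" using sum_squares_bound[of "\<bar>q\<bar>" "\<bar>w\<bar>"] by (simp add: abs_mult)
    have "B*B*\<bar>q*w\<bar> = B^2*(2*\<bar>q*w\<bar>)/2" by (simp add: power2_eq_square)
    also have "\<dots> \<le> B^2*(q^2+w^2)/2" using h2 by (intro divide_right_mono mult_left_mono) auto
    finally show ?thesis .
  qed
  finally have "B*c*q*w \<le> B^2*(q^2+w^2)/2" by linarith
  then have "B^2*(q^2+w^2)/2 \<le> B^2*(q^2+w^2) - B*c*q*w" by linarith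
  then have "l*(B^2*(q^2+w^2)/2) \<le> l*(B^2*(q^2+w^2) - B*c*q*w)" using assms(2) by (rule mult_left_mono)
  then show ?thesis by simp
qed

lemma F_upper:
  fixes B c q w l :: real
  assumes "\<bar>c\<bar> \<le> B" "l \<ge> 0"
  shows "l*(B^2*(q^2+w^2) - B*c*q*w) \<le> l*(3/2*(B^2*(q^2+w^2)))"
proof -
  have B0: "B \<ge> 0" using assms(1) by linarith
  have "\<bar>B*c*q*w\<bar> = B*(\<bar>c\<bar>*\<bar>q*w\<bar>)" using B0 by (simp add: abs_mult)
  also have "\<dots> \<le> B*(B*\<bar>q*w\<bar>)" using B0 assms(1) by (intro mult_left_mono mult_right_mono) auto
  also have "\<dots> = B*B*\<bar>q*w\<bar>" by simp
  also have "\<dots> \<le> B^2*(q^2+w^2)/2"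
  proof -
    have h2: "2*\<bar>q*w\<bar> \<le> q^2+w^2" using sum_squares_bound[of "\<bar>q\<bar>" "\<bar>w\<bar>"] by (simp add: abs_mult)
    have "B*B*\<bar>q*w\<bar> = B^2*(2*\<bar>q*w\<bar>)/2" by (simp add: power2_eq_square)
    also have "\<dots> \<le> B^2*(q^2+w^2)/2" using h2 by (intro divide_right_mono mult_left_mono) auto
    finally show ?thesis .
  qed
  finally have "- (B*c*q*w) \<le> B^2*(q^2+w^2)/2" by linarith
  then show ?thesis using assms(2) by (intro mult_left_mono) auto
qed

lemma window:
  fixes v :: "nat \<Rightarrow> real" and x R :: real and m s L :: nat
  assumes x0: "x > 0"
  and rec: "\<And>k. k \<ge> 1 \<Longrightarrow> sqrt(x*(real k+1)) * v(k+1) + sqrt(x*real k) * v(k-1) = (real m - real k - x) * v k"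
  and R: "R = sqrt(x*real m)" and L1: "real L \<le> R/8" and sR: "4*real s \<le> R" and xR: "8*x \<le> R" and R8: "8 \<le> R"
  shows "real L * (v (m+s))^2 \<le> 18 * (\<Sum>k\<le>m+s+L. (v k)^2)"
proof -
  define k0 where "k0 = m+s"
  define d where "d = 4/R"
  define lam where "lam k = 1 + d*(real k - real k0)" for k
  define Bk where "Bk k = sqrt(x*(real k+1))" for k
  define cc where "cc k = real m - real k - x" for k
  define F where "F k = lam k * ((Bk k)^2*((v k)^2 + (v (k+1))^2) - Bk k * cc k * v k * v (k+1))" for k
  have Rpos: "R > 0" using R8 by simp
  have d0: "d > 0" unfolding d_def using Rpos by simp
  have RR: "R^2 = x * real m" unfolding R using x0 by simp
  have Rm: "R \<le> real m / 8"
  proof -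
    have "x * real m \<le> (R/8) * real m" using xR by (intro mult_right_mono) auto
    then have "R^2 \<le> (R/8) * real m" using RR by simp
    then have "R * R \<le> R * (real m / 8)" by (simp add: power2_eq_square algebra_simps)
    then show ?thesis using Rpos by simp
  qed
  have Lk0: "real L \<le> real k0" using L1 Rm unfolding k0_def by simp
  have Bk2: "(Bk k)^2 = x*(real k+1)" for k unfolding Bk_def using x0 by simp
  have inwin: "\<bar>cc k\<bar> \<le> R/2 \<and> Bk k \<ge> R \<and> 1 \<le> lam k \<and> lam k \<le> 3/2" if "k0 \<le> k" "k \<le> k0 + L" for k
  proof (intro conjI)
    have "cc k = - (real k - real m + x)" unfolding cc_def by simp
    moreover have "real k - real m + x \<ge> 0" using that x0 unfolding k0_def by simp
    moreover have "real k - real m + x \<le> real s + real L + x" using that unfolding k0_def by simp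
    ultimately show "\<bar>cc k\<bar> \<le> R/2" using sR L1 xR by simp
    show "Bk k \<ge> R" unfolding Bk_def R using x0 that unfolding k0_def
      by (intro real_sqrt_le_mono mult_left_mono) auto
    show "1 \<le> lam k" unfolding lam_def using d0 that by simp
    have "d*(real k - real k0) \<le> d * real L" using d0 that by (intro mult_left_mono) auto
    also have "\<dots> \<le> (4/R) * (R/8)" unfolding d_def using L1 Rpos by (intro mult_left_mono) auto
    also have "\<dots> = 1/2" using Rpos by simp
    finally show "lam k \<le> 3/2" unfolding lam_def by simp
  qed
  have step: "F (k-1) \<le> F k" if hk: "k0 < k" "k \<le> k0 + L" for k
  proof -
    obtain j where kj: "k = Suc j" using hk by (cases k) auto
    have wj: "k0 \<le> j" "j \<le> k0 + L" using hk kj by auto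
    have wk: "k0 \<le> k" using hk by simp
    note I = inwin[OF wj] inwin[OF wk hk(2)]
    have recj: "Bk k * v (k+1) + Bk j * v j = cc k * v k"
      using rec[of k] hk kj unfolding Bk_def cc_def by (simp add: add.commute)
    have ccj: "cc j = cc k + 1" unfolding cc_def kj by simp
    have lamk: "lam k = lam j + d" unfolding lam_def kj by (simp add: algebra_simps)
    have BB: "(Bk k)^2 = (Bk j)^2 + x" unfolding Bk2 kj by (simp add: algebra_simps)
    have cond: "\<bar>lam j - d*cc k\<bar> \<le> 2*d*Bk k"
    proof -
      have "\<bar>lam j - d*cc k\<bar> \<le> lam j + d*\<bar>cc k\<bar>" using I d0 abs_triangle_ineq4[of "lam j" "d*cc k"] by (simp add: abs_mult)
      also have "\<dots> \<le> 3/2 + d*(R/2)" using I d0 by (intro add_mono mult_left_mono) auto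
      also have "\<dots> = 7/2" unfolding d_def using Rpos by simp
      also have "\<dots> \<le> 2*d*R" unfolding d_def using Rpos by simp
      also have "\<dots> \<le> 2*d*Bk k" using I d0 by simp
      finally show ?thesis .
    qed
    have "lam j*((Bk j)^2*((v j)^2+(v k)^2) - Bk j*(cc k+1)* v j* v k) \<le> lam k*((Bk k)^2*((v k)^2+(v (k+1))^2) - Bk k*cc k* v k* v (k+1))"
      by (rule sonin_step[OF recj _ lamk BB _ _ _ _ cond]) (use d0 x0 I in \<open>auto simp: Bk_def\<close>)
    then show ?thesis unfolding F_def using ccj kj by simp
  qed
  have chain: "F k0 \<le> F (k0 + j)" if "j \<le> L" for j
    using that
  proof (induction j)
    case 0 then show ?case by simp
  next
    case (Suc j)
    then have "F k0 \<le> F (k0 + j)" by simp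
    also have "\<dots> \<le> F (k0 + Suc j)" using step[of "k0 + Suc j"] Suc.prems by simp
    finally show ?case .
  qed
  have low: "x*(real k0+1)*(v k0)^2/2 \<le> F k0"
  proof -
    have I: "\<bar>cc k0\<bar> \<le> Bk k0" "lam k0 = 1" using inwin[of k0] Rpos unfolding lam_def by auto
    have "x*(real k0+1)*(v k0)^2/2 \<le> lam k0*((Bk k0)^2*((v k0)^2+(v (k0+1))^2))/2"
      unfolding I(2) Bk2 using x0 by (simp add: mult_left_mono)
    also have "\<dots> \<le> F k0" unfolding F_def by (rule F_lower) (use I in auto)
    finally show ?thesis .
  qed
  have upp: "F k \<le> 9/2 * x*(real k0+1) * ((v k)^2 + (v (k+1))^2)" if "k0 \<le> k" "k < k0 + L" for k
  proof -
    have I: "\<bar>cc k\<bar> \<le> Bk k" "lam k \<le> 3/2" "1 \<le> lam k" using inwin[of k] that Rpos by auto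
    have "F k \<le> lam k*(3/2*((Bk k)^2*((v k)^2+(v (k+1))^2)))" unfolding F_def
      by (rule F_upper) (use I in auto)
    also have "\<dots> \<le> 3/2*(3/2*((Bk k)^2*((v k)^2+(v (k+1))^2)))"
      by (rule mult_right_mono[OF I(2)]) simp
    also have "(Bk k)^2 \<le> 2*x*(real k0+1)"
    proof -
      have "real k + 1 \<le> 2*(real k0+1)" using that Lk0 by simp
      then show ?thesis unfolding Bk2 using x0 by (simp add: mult_left_mono)
    qed
    then have "3/2*(3/2*((Bk k)^2*((v k)^2+(v (k+1))^2))) \<le> 3/2*(3/2*((2*x*(real k0+1))*((v k)^2+(v (k+1))^2)))"
      by (intro mult_left_mono mult_right_mono) auto
    finally show ?thesis by (simp add: algebra_simps)
  qed
  have each: "(v k0)^2 \<le> 9 * ((v k)^2 + (v (k+1))^2)" if "k0 \<le> k" "k < k0 + L" for k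
  proof -
    have "F k0 \<le> F k" using chain[of "k - k0"] that by simp
    then have "x*(real k0+1)*(v k0)^2/2 \<le> 9/2 * x*(real k0+1) * ((v k)^2 + (v (k+1))^2)"
      using low upp[OF that] by linarith
    then have "(x*(real k0+1)) * (v k0)^2 \<le> (x*(real k0+1)) * (9 * ((v k)^2 + (v (k+1))^2))"
      by (simp add: algebra_simps)
    moreover have "x*(real k0+1) > 0" using x0 by simp
    ultimately show ?thesis by (rule mult_left_le_imp_le)
  qed
  have "real L * (v k0)^2 = (\<Sum>k\<in>{k0..<k0+L}. (v k0)^2)" by simp
  also have "\<dots> \<le> (\<Sum>k\<in>{k0..<k0+L}. 9 * ((v k)^2 + (v (k+1))^2))"
    by (rule sum_mono) (use each in auto)
  also have "\<dots> = 9 * ((\<Sum>k\<in>{k0..<k0+L}. (v k)^2) + (\<Sum>k\<in>{k0..<k0+L}. (v (k+1))^2))"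
    by (simp add: sum.distrib sum_distrib_left)
  also have "(\<Sum>k\<in>{k0..<k0+L}. (v k)^2) \<le> (\<Sum>k\<le>k0+L. (v k)^2)"
    by (rule sum_mono2) auto
  also have "(\<Sum>k\<in>{k0..<k0+L}. (v (k+1))^2) = (\<Sum>k\<in>{Suc k0..<Suc (k0+L)}. (v k)^2)"
    using sum.shift_bounds_Suc_ivl[of "\<lambda>k. (v k)^2" k0 "k0+L"] by simp
  also have "\<dots> \<le> (\<Sum>k\<le>k0+L. (v k)^2)"
    by (rule sum_mono2) auto
  finally show ?thesis unfolding k0_def by simp
qed

lemma D_diag: "D a m (m+s) = (\<Sum>i\<in>{0..m}. (-1)^(s+i) * (a^s * (a^2)^i) / (fact (m-i) * fact i * fact (s+i)))"
proof -
  have "D a m (m+s) = (\<Sum>j\<in>{0..m}. T a m (m+s) j)" unfolding D_def by (simp add: atLeast0AtMost)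
  also have "\<dots> = (\<Sum>i\<in>{0..m}. T a m (m+s) (m + 0 - i))" by (rule sum.atLeastAtMost_rev)
  also have "\<dots> = (\<Sum>i\<in>{0..m}. (-1)^(s+i) * (a^s * (a^2)^i) / (fact (m-i) * fact i * fact (s+i)))"
  proof (rule sum.cong[OF refl])
    fix i assume i: "i \<in> {0..m}"
    then have e: "m + s - (m - i) = s + i" "m + (m+s) - 2*(m-i) = s + 2*i" "m - (m - i) = i" by auto
    have p: "a^(s + 2*i) = a^s * (a^2)^i" by (simp add: power_add power_mult)
    have sg: "(-1::real)^(s+i) = (-1)^s * (-1)^i" by (simp add: power_add)
    show "T a m (m+s) (m + 0 - i) = (-1)^(s+i) * (a^s * (a^2)^i) / (fact (m-i) * fact i * fact (s+i))"
      using i unfolding T_def by (simp add: e p)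
  qed
  finally show ?thesis .
qed

lemma sqrt_fact_id: "sqrt (fact m / fact (m+s)) * fact (m+s) = sqrt (fact m * fact (m+s) :: real)"
proof -
  have "sqrt (fact m / fact (m+s)) * fact (m+s) = sqrt (fact m) * (fact (m+s) / sqrt (fact (m+s)) :: real)"
    by (simp add: real_sqrt_divide)
  also have "(fact (m+s) / sqrt (fact (m+s)) :: real) = sqrt (fact (m+s))" by (rule real_div_sqrt) simp
  finally show ?thesis by (simp add: real_sqrt_mult)
qed

lemma lag_D:
  assumes x0: "x > 0"
  shows "laguerre_fun m s x = (-1)^s * exp(-x/2) * (sqrt(fact m * fact (m+s)) * D (sqrt x) m (m+s))"
proof -
  define a where "a = sqrt x"
  have a2: "a^2 = x" unfolding a_def using x0 by simp
  define S where "S = (\<Sum>i\<in>{0..m}. (-1)^i * (a^s * x^i) / (fact (m-i) * fact i * fact (s+i)))"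
  have DS: "D a m (m+s) = (-1)^s * S"
    unfolding D_diag S_def a2 sum_distrib_left by (intro sum.cong refl) (simp add: power_add)
  have lag: "laguerre m s x = fact (m+s) * (\<Sum>i\<in>{0..m}. (-1)^i * x^i / (fact (m-i) * fact i * fact (s+i)))"
    unfolding laguerre_def sum_distrib_left
  proof (intro sum.cong refl)
    fix i assume "i \<in> {0..m}"
    then have im: "i \<le> m" by simp
    have "fact (m+s) / fact m * (real (m choose i) * (-1)^i * x^i / fact (i+s))
       = fact (m+s) / fact m * (fact m / (fact i * fact (m-i)) * (-1)^i * x^i / fact (i+s))"
      by (simp add: binomial_fact[OF im])
    also have "\<dots> = fact (m+s) * ((-1)^i * x^i / (fact (m-i) * fact i * fact (s+i)))"
      by (simp add: field_simps add.commute)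
    finally show "fact (m+s) / fact m * (real (m choose i) * (-1)^i * x^i / fact (i+s)) = fact (m+s) * ((-1)^i * x^i / (fact (m-i) * fact i * fact (s+i)))" .
  qed
  have pw: "x powr (real s / 2) = a^s"
  proof -
    have "a^s = a powr (real s)" unfolding a_def using x0 by (simp add: powr_realpow)
    also have "\<dots> = (x powr (1/2)) powr (real s)" unfolding a_def using x0 by (simp add: powr_half_sqrt)
    also have "\<dots> = x powr (real s / 2)" by (simp add: powr_powr)
    finally show ?thesis by simp
  qed
  have "laguerre_fun m s x = (sqrt (fact m / fact (m+s)) * fact (m+s)) * exp (-x/2) * (a^s * (\<Sum>i\<in>{0..m}. (-1)^i * x^i / (fact (m-i) * fact i * fact (s+i))))"
    unfolding laguerre_fun_def lag pw by (simp add: algebra_simps)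
  also have "a^s * (\<Sum>i\<in>{0..m}. (-1)^i * x^i / (fact (m-i) * fact i * fact (s+i))) = S"
    unfolding S_def sum_distrib_left by (intro sum.cong refl) (simp add: algebra_simps)
  also have "S = (-1)^s * D a m (m+s)" unfolding DS by (simp add: power_add[symmetric] power_mult[symmetric] mult_2[symmetric] flip: power_add)
  finally show ?thesis unfolding sqrt_fact_id a_def by (simp add: algebra_simps)
qed

lemma v_rec:
  fixes x :: real and m k :: nat
  assumes x0: "x > 0" and k1: "k \<ge> 1"
  defines "v \<equiv> \<lambda>k. sqrt (fact m * fact k) * D (sqrt x) m k"
  shows "sqrt(x*(real k+1)) * v(k+1) + sqrt(x*real k) * v(k-1) = (real m - real k - x) * v k"
proof -
  define a where "a = sqrt x"
  define \<sigma> where "\<sigma> = sqrt (fact m * fact k :: real)"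
  obtain j where kj: "k = Suc j" using k1 by (cases k) auto
  have r1: "(real m - real k - a^2) * D a m k = a * (D a m j + real (Suc k) * D a m (Suc k))"
    using R1[of m k a] kj by simp
  have a2: "a^2 = x" unfolding a_def using x0 by simp
  have s1: "sqrt(x*real k) * v(k-1) = a * \<sigma> * D a m j"
  proof -
    have "sqrt(x*real k) * sqrt (fact m * fact j) = sqrt x * sqrt (real k * fact m * fact j)"
      by (simp add: real_sqrt_mult mult.assoc)
    also have "real k * fact m * fact j = (fact m * fact k :: real)" unfolding kj by (simp add: fact_Suc)
    finally show ?thesis unfolding v_def a_def \<sigma>_def kj by simp
  qed
  have s2: "sqrt(x*(real k+1)) * v(k+1) = a * (real (Suc k) * \<sigma>) * D a m (Suc k)"
  proof -
    have "sqrt(x*(real k+1)) * sqrt (fact m * fact (Suc k)) = sqrt (x*(real k+1) * (fact m * fact (Suc k)))"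
      by (simp only: real_sqrt_mult)
    also have "x*(real k+1) * (fact m * fact (Suc k)) = x * ((real k+1)^2 * (fact m * fact k))"
      by (simp add: fact_Suc power2_eq_square algebra_simps)
    also have "sqrt (x * ((real k+1)^2 * (fact m * fact k))) = sqrt x * sqrt ((real k+1)^2 * (fact m * fact k))"
      by (simp only: real_sqrt_mult)
    finally have "sqrt(x*(real k+1)) * sqrt (fact m * fact (Suc k)) = sqrt x * sqrt ((real k+1)^2 * (fact m * fact k))" .
    also have "sqrt ((real k+1)^2 * (fact m * fact k)) = (real k + 1) * \<sigma>" unfolding \<sigma>_def
      by (simp add: real_sqrt_mult)
    finally show ?thesis unfolding v_def a_def by (simp add: algebra_simps)
  qed
  have "sqrt(x*(real k+1)) * v(k+1) + sqrt(x*real k) * v(k-1) = \<sigma> * (a * (D a m j + real (Suc k) * D a m (Suc k)))"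
    unfolding s1 s2 by (simp add: algebra_simps)
  also have "\<dots> = \<sigma> * ((real m - real k - a^2) * D a m k)" by (simp only: r1)
  also have "\<dots> = (real m - real k - x) * v k" unfolding v_def a2 \<sigma>_def a_def using x0 by simp
  finally show ?thesis .
qed

lemma v_mass:
  assumes x0: "x > 0"
  shows "(\<Sum>k\<le>K. (sqrt (fact m * fact k) * D (sqrt x) m k)^2) \<le> exp x"
proof -
  have "(\<Sum>k\<le>K. (sqrt (fact m * fact k) * D (sqrt x) m k)^2) = M (sqrt x) m K"
    unfolding M_def sum_distrib_left by (intro sum.cong refl) (simp add: power_mult_distrib)
  also have "\<dots> \<le> exp ((sqrt x)^2)" by (rule M_bound)
  finally show ?thesis using x0 by simp
qed

lemma nb3:
  fixes x R :: real and n s :: nat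
  assumes x0: "x > 0" and R0: "R \<ge> 0" and RR: "R^2 = x * real n" and ns: "s^16 \<le> n" and c: "R < 4 * real s"
  shows "real n < 256 / x^2"
proof -
  have "R^2 < (4*real s)^2" using R0 c by (intro power_strict_mono) auto
  then have h: "x * real n < 16 * (real s)^2" using RR by (simp add: power_mult_distrib)
  have s1: "s \<ge> 1"
  proof (rule ccontr)
    assume "\<not> s \<ge> 1" then have "s = 0" by simp
    moreover have "x * real n \<ge> 0" using x0 by simp
    ultimately show False using h by simp
  qed
  have "real (s ^ 16) \<le> real n" using ns by (simp only: of_nat_le_iff)
  then have "real s ^ 16 \<le> real n" by simp
  then have "x * real s ^ 16 \<le> x * real n" using x0 by (intro mult_left_mono) auto
  then have h2: "x * real s ^ 16 < 16 * (real s)^2" using h by linarith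
  have e: "real s ^ 16 = (real s)^2 * real s ^ 14" by (simp only: power_add[symmetric]) simp
  have "(real s)^2 * (x * real s ^ 14) < (real s)^2 * 16" using h2 unfolding e by (simp only: mult.commute mult.left_commute)
  moreover have "(real s)^2 > 0" using s1 by simp
  ultimately have h3: "x * real s ^ 14 < 16" by (simp only: mult_less_cancel_left_pos)
  have "(real s)^2 \<le> real s ^ 14" using s1 by (intro power_increasing) auto
  then have "x * (real s)^2 \<le> x * real s ^ 14" using x0 by (intro mult_left_mono) auto
  with h3 have "x * (real s)^2 < 16" by linarith
  then have s2: "(real s)^2 < 16/x" using x0 by (simp add: field_simps)
  have "16 * (real s)^2 \<le> 16 * (16/x)" using s2 by simp
  with h have "x * real n < 16 * (16/x)" by linarith
  then show ?thesis using x0 by (simp add: field_simps power2_eq_square)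
qed

lemma nb12:
  fixes x R :: real and n :: nat
  assumes x0: "x > 0" and R0: "R \<ge> 0" and RR: "R^2 = x * real n" and c: "R < 8 \<or> R < 8*x"
  shows "real n < 64/x + 64*x"
proof -
  have p: "64/x > 0" "64*x > 0" using x0 by simp_all
  from c show ?thesis
  proof
    assume "R < 8"
    then have "R^2 < 8^2" using R0 by (intro power_strict_mono) auto
    then have "x * real n < 64" using RR by simp
    then have "real n < 64/x" using x0 by (simp add: field_simps)
    then show ?thesis using p by linarith
  next
    assume "R < 8*x"
    then have "R^2 < (8*x)^2" using R0 by (intro power_strict_mono) auto
    then have "x * real n < x * (64 * x)" using RR by (simp add: power2_eq_square algebra_simps)
    then have "real n < 64*x" using x0 by simp
    then show ?thesis using p by linarith
  qed
qed

lemma lf_sq: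
  assumes x0: "x > 0"
  shows "(laguerre_fun m s x)^2 = exp (-x) * (sqrt (fact m * fact (m+s)) * D (sqrt x) m (m+s))^2"
proof -
  have e: "(exp (-(x/2)))^2 = exp (-x)" by (simp add: power2_eq_square exp_add[symmetric])
  have m1: "((-1::real)^s)^2 = 1" by (simp add: power_even_eq power_mult_distrib flip: power_mult)
  show ?thesis unfolding lag_D[OF x0] by (simp add: power_mult_distrib e m1)
qed

lemma lf_le1:
  assumes x0: "x > 0"
  shows "(laguerre_fun m s x)^2 \<le> 1"
proof -
  define w where "w = (sqrt (fact m * fact (m+s)) * D (sqrt x) m (m+s))^2"
  have "w \<le> (\<Sum>k\<le>m+s. (sqrt (fact m * fact k) * D (sqrt x) m k)^2)"
    unfolding w_def by (rule member_le_sum) auto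
  also have "\<dots> \<le> exp x" by (rule v_mass[OF x0])
  finally have "exp (-x) * w \<le> exp (-x) * exp x" by simp
  then show ?thesis unfolding lf_sq[OF x0] w_def by (simp add: exp_minus field_simps)
qed

lemma lf_good:
  assumes x0: "x > 0" and R: "R = sqrt (x * real m)" and R8: "8 \<le> R" and xR: "8*x \<le> R" and sR: "4*real s \<le> R"
  shows "(laguerre_fun m s x)^2 \<le> 288 / R"
proof -
  define v where "v = (\<lambda>k. sqrt (fact m * fact k) * D (sqrt x) m k)"
  define L where "L = nat \<lfloor>R/8\<rfloor>"
  have Rpos: "R > 0" using R8 by simp
  have fl: "real L = of_int \<lfloor>R/8\<rfloor>" unfolding L_def using R8 by simp
  have L1: "real L \<le> R/8" unfolding fl using of_int_floor_le[of "R/8"] by simp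
  have L2: "real L \<ge> R/16"
  proof -
    have "of_int \<lfloor>R/8\<rfloor> \<ge> (1::real)" using R8 by simp
    moreover have "of_int \<lfloor>R/8\<rfloor> > R/8 - 1" by linarith
    ultimately show ?thesis unfolding fl by linarith
  qed
  have rec: "\<And>k. k \<ge> 1 \<Longrightarrow> sqrt(x*(real k+1)) * v(k+1) + sqrt(x*real k) * v(k-1) = (real m - real k - x) * v k"
    unfolding v_def by (rule v_rec[OF x0])
  have W: "real L * (v (m+s))^2 \<le> 18 * (\<Sum>k\<le>m+s+L. (v k)^2)"
    by (rule window[OF x0 rec R L1 sR xR R8])
  also have "\<dots> \<le> 18 * exp x" unfolding v_def using v_mass[OF x0] by simp
  finally have W2: "real L * (v (m+s))^2 \<le> 18 * exp x" .
  have "R/16 * (v (m+s))^2 \<le> real L * (v (m+s))^2" using L2 by (intro mult_right_mono) auto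
  with W2 have "R/16 * (v (m+s))^2 \<le> 18 * exp x" by linarith
  then have "(v (m+s))^2 \<le> 288 * exp x / R" using Rpos by (simp add: field_simps)
  then have "exp (-x) * (v (m+s))^2 \<le> exp (-x) * (288 * exp x / R)" by (intro mult_left_mono) auto
  also have "\<dots> = 288 / R" by (simp add: exp_minus field_simps)
  finally show ?thesis unfolding lf_sq[OF x0] v_def .
qed

theorem lemma4:
  fixes x :: real
  assumes "x > 0"
  shows "\<exists>C. \<forall>n s :: nat. s ^ 16 \<le> n \<longrightarrow>
           \<bar>laguerre_fun n s x\<bar> \<le> C / (real n + 1) powr (1/4)"
proof -
  have x0: "x > 0" by fact
  define M0 where "M0 = 64/x + 64*x + 256/x^2"
  define C2 where "C2 = 288 * sqrt 2 / sqrt x"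
  define C where "C = sqrt (sqrt (M0 + 1) + C2)"
  have mp: "64/x \<ge> 0" "64*x \<ge> 0" "256/x^2 \<ge> 0" using x0 by simp_all
  have M0pos: "M0 \<ge> 0" unfolding M0_def using mp by linarith
  have C2pos: "C2 \<ge> 0" unfolding C2_def using x0 by simp
  have sq0: "sqrt (M0 + 1) \<ge> 0" using M0pos by simp
  have Cpos: "C \<ge> 0" unfolding C_def using sq0 C2pos by simp
  have C2eq: "C^2 = sqrt (M0 + 1) + C2" unfolding C_def
    by (rule real_sqrt_pow2) (use sq0 C2pos in linarith)
  show ?thesis
  proof (intro exI allI impI)
    fix n s :: nat assume ns: "s ^ 16 \<le> n"
    define p where "p = (real n + 1) powr (1/4)"
    have ppos: "p > 0" unfolding p_def by simp
    have p2: "p^2 = sqrt (real n + 1)"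
    proof -
      have "p^2 = (real n + 1) powr (1/4 * 2)" unfolding p_def by (simp add: power2_eq_square powr_add[symmetric])
      also have "\<dots> = sqrt (real n + 1)" by (simp add: powr_half_sqrt)
      finally show ?thesis .
    qed
    define l where "l = laguerre_fun n s x"
    have key: "l^2 * sqrt (real n + 1) \<le> C^2"
    proof -
      define R where "R = sqrt (x * real n)"
      have R0: "R \<ge> 0" unfolding R_def using x0 by simp
      have RR: "R^2 = x * real n" unfolding R_def using x0 by simp
      show ?thesis
      proof (cases "8 \<le> R \<and> 8*x \<le> R \<and> 4*real s \<le> R")
        case True
        then have g: "l^2 \<le> 288 / R" unfolding l_def by (intro lf_good[OF x0 R_def]) auto
        have n1: "real n \<ge> 1"
        proof (rule ccontr)
          assume "\<not> real n \<ge> 1" then have "n = 0" by simp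
          then show False using True unfolding R_def by simp
        qed
        have "l^2 * sqrt (real n + 1) \<le> 288 / R * sqrt (real n + 1)" using g by (intro mult_right_mono) auto
        also have "\<dots> \<le> 288 / R * sqrt (2 * real n)" using True R0 n1
          by (intro mult_left_mono real_sqrt_le_mono) auto
        also have "\<dots> = C2"
        proof -
          have "sqrt (2 * real n) = sqrt 2 * sqrt (real n)" by (simp add: real_sqrt_mult)
          moreover have "R = sqrt x * sqrt (real n)" unfolding R_def by (simp add: real_sqrt_mult)
          moreover have "sqrt (real n) > 0" using n1 by simp
          moreover have "sqrt x > 0" using x0 by simp
          ultimately show ?thesis unfolding C2_def by (simp add: field_simps)
        qed
        also have "\<dots> \<le> C^2" unfolding C2eq using sq0 by simp
        finally show ?thesis .
      next
        case False
        have nb: "real n \<le> M0"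
        proof (cases "R < 4 * real s")
          case True
          then have "real n < 256/x^2" by (rule nb3[OF x0 R0 RR ns])
          then show ?thesis unfolding M0_def using mp by linarith
        next
          case c: False
          then have "R < 8 \<or> R < 8*x" using False by linarith
          then have "real n < 64/x + 64*x" by (rule nb12[OF x0 R0 RR])
          then show ?thesis unfolding M0_def using mp by linarith
        qed
        have "l^2 * sqrt (real n + 1) \<le> 1 * sqrt (M0 + 1)"
          using lf_le1[OF x0, of n s] nb unfolding l_def
          by (intro mult_mono real_sqrt_le_mono) auto
        also have "\<dots> \<le> C^2" unfolding C2eq using C2pos by simp
        finally show ?thesis .
      qed
    qed
    have "(\<bar>l\<bar> * p)^2 \<le> C^2" using key by (simp add: power_mult_distrib p2)
    then have "\<bar>l\<bar> * p \<le> C" using Cpos by (rule power2_le_imp_le)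
    then show "\<bar>laguerre_fun n s x\<bar> \<le> C / (real n + 1) powr (1/4)"
      using ppos unfolding l_def p_def by (simp add: field_simps)
  qed
qed

end
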